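(* Let $I$ be a monomial ideal of $R=K[x_1,\ldots,x_d]$ ($K$ a field). The function $\exp:\mathbb{R}_+\to\mathcal{T}$, $\exp(r)=\overline{I^r}$, where $\mathbb{R}_+$ carries the Euclidean topology and $\mathcal{T}=\{\overline{I^r}\mid r\in\mathbb{R}_+\}$ carries the discrete topology, is left continuous. Equivalently, for every $r>0$ there exists $\varepsilon_0>0$ such that $\overline{I^{r-\varepsilon}}=\overline{I^r}$ for all $0<\varepsilon<\varepsilon_0$.
   Context: $\mathbb{R}_+$ denotes the non-negative reals, $\mathbb{N}$ the non-negative integers, and $\mathbf{x}^{\mathbf{a}}=x_1^{a_1}\cdots x_d^{a_d}$. $NP(I)$ is the convex hull in $\mathbb{R}^d$ of $\{\mathbf{a}\in\mathbb{N}^d\mid \mathbf{x}^{\mathbf{a}}\in I\}$. For real $t\ge0$, the $t$-th real power of $I$ is $\overline{I^t}=(\{\mathbf{x}^{\mathbf{a}}\mid \mathbf{a}\in t\cdot NP(I)\cap\mathbb{N}^d\})$, where $t\cdot NP(I)=\{t\mathbf{v}\mid \mathbf{v}\in NP(I)\}$. *)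

theory Defs
  imports "HOL-Analysis.Analysis" "HOL-Library.Poly_Mapping"
begin

text \<open>Polynomial ring K[x_i | i in 'n] over a field 'k, with finitely many variables
  indexed by the finite type 'n (so d = CARD('n)).\<close>

type_synonym ('n, 'k) mpoly = "('n \<Rightarrow>\<^sub>0 nat) \<Rightarrow>\<^sub>0 'k"

definition monom :: "('n \<Rightarrow>\<^sub>0 nat) \<Rightarrow> ('n, 'k::field) mpoly" where
  "monom a = Poly_Mapping.single a 1"

definition is_ideal :: "('n, 'k::field) mpoly set \<Rightarrow> bool" where
  "is_ideal I \<longleftrightarrow> 0 \<in> I \<and> (\<forall>p\<in>I. \<forall>q\<in>I. p + q \<in> I) \<and> (\<forall>r. \<forall>p\<in>I. r * p \<in> I)"

definition ideal_gen :: "('n, 'k::field) mpoly set \<Rightarrow> ('n, 'k) mpoly set" where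
  "ideal_gen S = {p. \<exists>F c. finite F \<and> F \<subseteq> S \<and> p = (\<Sum>s\<in>F. c s * s)}"

definition monomial_ideal :: "('n, 'k::field) mpoly set \<Rightarrow> bool" where
  "monomial_ideal I \<longleftrightarrow> is_ideal I \<and> I = ideal_gen {monom a | a. monom a \<in> I}"

definition expvec :: "('n::finite \<Rightarrow>\<^sub>0 nat) \<Rightarrow> real ^ 'n" where
  "expvec a = (\<chi> i. real (Poly_Mapping.lookup a i))"

definition NP :: "('n::finite, 'k::field) mpoly set \<Rightarrow> (real ^ 'n) set" where
  "NP I = convex hull {expvec a | a. monom a \<in> I}"

definition real_power :: "('n::finite, 'k::field) mpoly set \<Rightarrow> real \<Rightarrow> ('n, 'k) mpoly set" where
  "real_power I t = ideal_gen {monom a | a. expvec a \<in> (\<lambda>v. t *\<^sub>R v) ` NP I}"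

end

theory Submission
  imports Defs
begin

definition ple :: "('n \<Rightarrow>\<^sub>0 nat) \<Rightarrow> ('n \<Rightarrow>\<^sub>0 nat) \<Rightarrow> bool" where
  "ple a b \<longleftrightarrow> (\<forall>i. Poly_Mapping.lookup a i \<le> Poly_Mapping.lookup b i)"

lemma nat_seq_incsub:
  fixes u :: "nat \<Rightarrow> nat"
  shows "\<exists>h::nat\<Rightarrow>nat. strict_mono h \<and> mono (\<lambda>k. u (h k))"
proof -
  obtain f where f: "strict_mono f" "monoseq (\<lambda>n. u (f n))" using seq_monosub by blast
  show ?thesis
  proof (cases "\<forall>m n. m \<le> n \<longrightarrow> u (f m) \<le> u (f n)")
    case True
    then have "mono (\<lambda>n. u (f n))" by (simp add: mono_def)
    with f(1) show ?thesis by blast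
  next
    case False
    then have dec: "\<forall>m n. m \<le> n \<longrightarrow> u (f n) \<le> u (f m)" using f(2) by (auto simp: monoseq_def)
    obtain N where N: "\<forall>k. u (f N) \<le> u (f k)" using ex_has_least_nat[of "\<lambda>_. True" 0 "\<lambda>k. u (f k)"] by blast
    have c: "u (f (k + N)) = u (f N)" for k using dec N by (meson antisym le_add2)
    have "strict_mono (\<lambda>k. f (k + N))" using f(1) by (simp add: strict_mono_def)
    moreover have "mono (\<lambda>k. u (f (k + N)))" using c by (simp add: mono_def)
    ultimately show ?thesis by blast
  qed
qed

lemma seq_good:
  fixes f :: "nat \<Rightarrow> ('n::finite \<Rightarrow>\<^sub>0 nat)"
  shows "\<exists>i j. i < j \<and> ple (f i) (f j)"
proof -
  have "finite S \<Longrightarrow> \<exists>h::nat\<Rightarrow>nat. strict_mono h \<and> (\<forall>i\<in>S. mono (\<lambda>k. Poly_Mapping.lookup (f (h k)) i))" for S :: "'n set"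
  proof (induction S rule: finite_induct)
    case empty
    have "strict_mono (id :: nat \<Rightarrow> nat)" by (simp add: strict_mono_def)
    then show ?case by blast
  next
    case (insert j S)
    then obtain h :: "nat \<Rightarrow> nat" where h: "strict_mono h" "\<forall>i\<in>S. mono (\<lambda>k. Poly_Mapping.lookup (f (h k)) i)" by blast
    obtain h2 :: "nat \<Rightarrow> nat" where h2: "strict_mono h2" "mono (\<lambda>k. Poly_Mapping.lookup (f (h (h2 k))) j)"
      using nat_seq_incsub[of "\<lambda>k. Poly_Mapping.lookup (f (h k)) j"] by blast
    have "strict_mono (h \<circ> h2)" using h(1) h2(1) by (simp add: strict_mono_def)
    moreover have "\<forall>i\<in>insert j S. mono (\<lambda>k. Poly_Mapping.lookup (f ((h \<circ> h2) k)) i)"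
    proof
      fix i assume "i \<in> insert j S"
      then show "mono (\<lambda>k. Poly_Mapping.lookup (f ((h \<circ> h2) k)) i)"
      proof
        assume "i = j" then show ?thesis using h2(2) by simp
      next
        assume "i \<in> S"
        then have m: "mono (\<lambda>k. Poly_Mapping.lookup (f (h k)) i)" using h(2) by blast
        show ?thesis unfolding mono_def o_def
          using m strict_mono_mono[OF h2(1)] by (simp add: mono_def)
      qed
    qed
    ultimately show ?case by blast
  qed
  from this[of UNIV] obtain h :: "nat \<Rightarrow> nat" where h: "strict_mono h" "\<forall>i. mono (\<lambda>k. Poly_Mapping.lookup (f (h k)) i)" by auto
  have "h 0 < h 1" using h(1) by (simp add: strict_mono_def)
  moreover have "ple (f (h 0)) (f (h 1))" using h(2) unfolding ple_def mono_def by simp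
  ultimately show ?thesis by blast
qed

lemma dickson:
  fixes E :: "('n::finite \<Rightarrow>\<^sub>0 nat) set"
  shows "\<exists>G. finite G \<and> G \<subseteq> E \<and> (\<forall>e\<in>E. \<exists>g\<in>G. ple g e)"
proof -
  define G where "G = {g\<in>E. \<forall>e\<in>E. ple e g \<longrightarrow> e = g}"
  have fin: "finite G"
  proof (rule ccontr)
    assume "infinite G"
    then obtain f :: "nat \<Rightarrow> _" where f: "inj f" "range f \<subseteq> G" using infinite_countable_subset by blast
    obtain i j where ij: "i < j" "ple (f i) (f j)" using seq_good[of f] by blast
    have "f i \<in> E" "f j \<in> G" using f(2) by (auto simp: G_def)
    then have "f i = f j" using ij(2) by (auto simp: G_def)
    then show False using f(1) ij(1) by (simp add: inj_eq)
  qed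
  define w where "w e = (\<Sum>i\<in>UNIV. Poly_Mapping.lookup e i)" for e :: "'n \<Rightarrow>\<^sub>0 nat"
  have cov: "\<forall>e. w e = n \<longrightarrow> e \<in> E \<longrightarrow> (\<exists>g\<in>G. ple g e)" for n
  proof (induction n rule: less_induct)
    case (less n)
    show ?case
    proof (intro allI impI)
      fix e assume we: "w e = n" and eE: "e \<in> E"
      show "\<exists>g\<in>G. ple g e"
      proof (cases "e \<in> G")
        case True
        then show ?thesis by (auto simp: ple_def)
      next
        case False
        then obtain e' where e': "e' \<in> E" "ple e' e" "e' \<noteq> e" using eE by (auto simp: G_def)
        then obtain i where "Poly_Mapping.lookup e' i \<noteq> Poly_Mapping.lookup e i" by (meson poly_mapping_eqI)
        then have "Poly_Mapping.lookup e' i < Poly_Mapping.lookup e i" using e'(2) by (simp add: ple_def order_le_neq_trans)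
        then have "w e' < w e" unfolding w_def
          using e'(2) by (intro sum_strict_mono_ex1) (auto simp: ple_def)
        then obtain g where "g \<in> G" "ple g e'" using less we e'(1) by blast
        then show ?thesis using e'(2) by (meson ple_def order_trans)
      qed
    qed
  qed
  show ?thesis using fin cov by (intro exI[of _ G]) (auto simp: G_def)
qed

lemma monom_mult: "monom b * monom a = (monom (b + a) :: ('n, 'k::field) mpoly)"
  by (simp add: monom_def mult_single)

lemma ideal_up:
  assumes "is_ideal I" "monom a \<in> I"
  shows "monom (a + b) \<in> (I :: ('n, 'k::field) mpoly set)"
proof -
  have "monom b * monom a \<in> I" using assms unfolding is_ideal_def by blast
  then show ?thesis by (simp add: monom_mult add.commute)
qed

lemma expvec_add: "expvec (a + b) = expvec a + expvec b"
  by (simp add: expvec_def vec_eq_iff lookup_add)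

lemma expvec_single: "expvec (Poly_Mapping.single j n) = (\<chi> i. if i = j then real n else 0)"
  by (simp add: expvec_def vec_eq_iff lookup_single when_def)

lemma step_up:
  fixes E :: "('n::finite \<Rightarrow>\<^sub>0 nat) set"
  assumes up: "\<And>a b. a \<in> E \<Longrightarrow> a + b \<in> E"
    and x: "x \<in> convex hull (expvec ` E)" and s: "s \<ge> 0"
  shows "x + (\<chi> i. if i = j then s else 0) \<in> convex hull (expvec ` E)"
proof (cases "s = 0")
  case True
  then have "(\<chi> i. if i = j then s else 0) = (0::real^'n)" by (simp add: vec_eq_iff)
  then show ?thesis using x by simp
next
  case False
  define n where "n = nat \<lceil>s\<rceil>"
  have sn: "s \<le> real n" "real n > 0" using s False by (auto simp: n_def)
  define v where "v = expvec (Poly_Mapping.single j n)"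
  have "(\<lambda>y. v + y) ` (expvec ` E) \<subseteq> expvec ` E"
  proof
    fix z assume "z \<in> (\<lambda>y. v + y) ` (expvec ` E)"
    then obtain e where e: "e \<in> E" "z = v + expvec e" by auto
    then have "z = expvec (e + Poly_Mapping.single j n)" by (simp add: v_def expvec_add add.commute)
    then show "z \<in> expvec ` E" using up[OF e(1)] by blast
  qed
  then have "convex hull ((\<lambda>y. v + y) ` (expvec ` E)) \<subseteq> convex hull (expvec ` E)"
    by (rule hull_mono)
  then have vx: "v + x \<in> convex hull (expvec ` E)"
    using x convex_hull_translation[of v "expvec ` E"] by blast
  have eq: "x + (\<chi> i. if i = j then s else 0) = (1 - s / real n) *\<^sub>R x + (s / real n) *\<^sub>R (v + x)"
    using sn by (simp add: v_def expvec_single vec_eq_iff field_simps)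
  show ?thesis unfolding eq
    by (rule convexD[OF convex_convex_hull x vx]) (use sn s in auto)
qed

lemma hull_up:
  fixes E :: "('n::finite \<Rightarrow>\<^sub>0 nat) set"
  assumes up: "\<And>a b. a \<in> E \<Longrightarrow> a + b \<in> E"
    and x: "x \<in> convex hull (expvec ` E)" and xy: "x \<le> y"
  shows "y \<in> convex hull (expvec ` E)"
proof -
  have "finite S \<Longrightarrow> \<forall>x y. x \<in> convex hull (expvec ` E) \<longrightarrow> x \<le> y \<longrightarrow> (\<forall>i. i \<notin> S \<longrightarrow> y$i = x$i)
     \<longrightarrow> y \<in> convex hull (expvec ` E)" for S :: "'n set"
  proof (induction S rule: finite_induct)
    case empty
    then show ?case by (metis (no_types) empty_iff vec_eq_iff)
  next
    case (insert j S)
    show ?case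
    proof (intro allI impI)
      fix x y :: "real^'n"
      assume a: "x \<in> convex hull (expvec ` E)" "x \<le> y" "\<forall>i. i \<notin> insert j S \<longrightarrow> y$i = x$i"
      define z where "z = x + (\<chi> i. if i = j then y$j - x$j else 0)"
      have "z \<in> convex hull (expvec ` E)" unfolding z_def
        using a(2) by (intro step_up[OF up a(1)]) (auto simp: less_eq_vec_def)
      moreover have "z \<le> y" using a(2) by (auto simp: z_def less_eq_vec_def)
      moreover have "\<forall>i. i \<notin> S \<longrightarrow> y$i = z$i" using a(3) by (auto simp: z_def)
      ultimately show "y \<in> convex hull (expvec ` E)" using insert.IH by blast
    qed
  qed
  from this[of UNIV] show ?thesis using x xy by auto
qed


theorem proposition5p6:
  fixes I :: "('n::finite, 'k::field) mpoly set" and r :: real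
  assumes "monomial_ideal I" and "r > 0"
  shows "\<exists>\<epsilon>0>0. \<epsilon>0 \<le> r \<and>
           (\<forall>\<epsilon>. 0 < \<epsilon> \<and> \<epsilon> < \<epsilon>0 \<longrightarrow> real_power I (r - \<epsilon>) = real_power I r)"
proof -
  have idl: "is_ideal I" using assms(1) by (simp add: monomial_ideal_def)
  define E where "E = {a. monom a \<in> I}"
  have up: "\<And>a b. a \<in> E \<Longrightarrow> a + b \<in> E" using ideal_up[OF idl] by (auto simp: E_def)
  have NPE: "NP I = convex hull (expvec ` E)" unfolding NP_def E_def by (rule arg_cong[where f="\<lambda>S. convex hull S"]) auto
  obtain G where G: "finite G" "G \<subseteq> E" "\<forall>e\<in>E. \<exists>g\<in>G. ple g e" using dickson[of E] by blast
  define P where "P = convex hull (expvec ` G)"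
  define Q where "Q = {y. \<exists>p\<in>P. p \<le> y}"
  have cP: "compact P" unfolding P_def using G(1) by (simp add: finite_imp_compact_convex_hull)
  have Pnn: "\<forall>p\<in>P. \<forall>i. 0 \<le> p$i"
  proof -
    have "convex {p::real^'n. \<forall>i. 0 \<le> p$i}" unfolding convex_def by auto
    moreover have "expvec ` G \<subseteq> {p::real^'n. \<forall>i. 0 \<le> p$i}" by (auto simp: expvec_def)
    ultimately have "P \<subseteq> {p::real^'n. \<forall>i. 0 \<le> p$i}" unfolding P_def by (rule hull_minimal[rotated])
    then show ?thesis by blast
  qed
  obtain K where K: "K \<ge> 0" "\<forall>p\<in>P. \<forall>i. p$i \<le> K"
  proof -
    obtain K0 where "\<forall>p\<in>P. norm p \<le> K0" using compact_imp_bounded[OF cP] bounded_iff by blast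
    then have "\<forall>p\<in>P. \<forall>i. p$i \<le> max K0 0"
      by (meson abs_le_D1 component_le_norm_cart max.coboundedI1 order_trans)
    then show ?thesis using that[of "max K0 0"] by simp
  qed
  have convQ: "convex Q"
  proof (rule convexI)
    fix x y u v assume xy: "x \<in> Q" "y \<in> Q" and uv0: "0 \<le> (u::real)" "0 \<le> v" "u + v = 1"
    then have uv: "0 \<le> (u::real) \<and> 0 \<le> v \<and> u + v = 1" by simp
    obtain px py where p: "px \<in> P" "px \<le> x" "py \<in> P" "py \<le> y" using xy by (auto simp: Q_def)
    have "u *\<^sub>R px + v *\<^sub>R py \<in> P" unfolding P_def
      by (rule convexD[OF convex_convex_hull]) (use p uv in \<open>auto simp: P_def\<close>)
    moreover have "u *\<^sub>R px + v *\<^sub>R py \<le> u *\<^sub>R x + v *\<^sub>R y"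
      using p uv by (auto simp: less_eq_vec_def intro!: add_mono mult_left_mono)
    ultimately show "u *\<^sub>R x + v *\<^sub>R y \<in> Q" by (auto simp: Q_def)
  qed
  have NPQ: "NP I = Q"
  proof
    have "expvec ` E \<subseteq> Q"
    proof
      fix z assume "z \<in> expvec ` E"
      then obtain e where e: "e \<in> E" "z = expvec e" by auto
      then obtain g where g: "g \<in> G" "ple g e" using G(3) by blast
      have "expvec g \<in> P" using g(1) unfolding P_def by (simp add: hull_inc)
      moreover have "expvec g \<le> expvec e" using g(2) by (simp add: less_eq_vec_def expvec_def ple_def)
      ultimately show "z \<in> Q" using e by (auto simp: Q_def)
    qed
    then show "NP I \<subseteq> Q" unfolding NPE using convQ by (rule hull_minimal)
  next
    show "Q \<subseteq> NP I"
    proof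
      fix y assume "y \<in> Q"
      then obtain p where p: "p \<in> P" "p \<le> y" by (auto simp: Q_def)
      have "P \<subseteq> convex hull (expvec ` E)" unfolding P_def using G(2) by (intro hull_mono) auto
      then show "y \<in> NP I" unfolding NPE using hull_up[OF up _ p(2)] p(1) by blast
    qed
  qed
  have closedQ: "closed Q"
  proof -
    have "Q = (\<Union>x\<in>{x::real^'n. \<forall>i. 0 \<le> x$i}. \<Union>y\<in>P. {x + y})"
    proof (auto simp: Q_def)
      fix z p :: "real^'n" assume "p \<in> P" "p \<le> z"
      then show "\<exists>x. (\<forall>i. 0 \<le> x $ i) \<and> (\<exists>y\<in>P. z = x + y)"
        by (intro exI[of _ "z - p"]) (auto simp: less_eq_vec_def)
    next
      fix x y :: "real^'n" assume "\<forall>i. 0 \<le> x $ i" "y \<in> P"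
      then show "\<exists>p\<in>P. p \<le> x + y" by (intro bexI[of _ y]) (auto simp: less_eq_vec_def)
    qed
    then show ?thesis using closed_compact_sums[OF closed_positive_orthant cP] by simp
  qed
  have scal: "v \<in> (\<lambda>v. t *\<^sub>R v) ` NP I \<longleftrightarrow> (\<exists>p\<in>P. t *\<^sub>R p \<le> v)" if t: "t > 0" for t v
  proof
    assume "v \<in> (\<lambda>v. t *\<^sub>R v) ` NP I"
    then obtain y p where "v = t *\<^sub>R y" "p \<in> P" "p \<le> y" by (auto simp: NPQ Q_def)
    then show "\<exists>p\<in>P. t *\<^sub>R p \<le> v" using t by (auto simp: less_eq_vec_def intro!: mult_left_mono)
  next
    assume "\<exists>p\<in>P. t *\<^sub>R p \<le> v"
    then obtain p where p: "p \<in> P" "t *\<^sub>R p \<le> v" by blast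
    have "p \<le> v /\<^sub>R t" using p(2) t by (auto simp: less_eq_vec_def field_simps)
    then have "v /\<^sub>R t \<in> NP I" using p(1) by (auto simp: NPQ Q_def)
    moreover have "v = t *\<^sub>R (v /\<^sub>R t)" using t by simp
    ultimately show "v \<in> (\<lambda>v. t *\<^sub>R v) ` NP I" by blast
  qed
  define c where "c = nat \<lceil>r * K\<rceil>"
  define F where "F = {v::real^'n. \<forall>i. v$i \<in> real ` {0..c}}"
  have finF: "finite F"
  proof -
    have "F \<subseteq> (\<lambda>f. \<chi> i. f i) ` (\<Pi>\<^sub>E i\<in>(UNIV::'n set). real ` {0..c})"
    proof
      fix v assume "v \<in> F"
      then have "(\<lambda>i. v$i) \<in> (\<Pi>\<^sub>E i\<in>(UNIV::'n set). real ` {0..c})" by (auto simp: F_def)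
      moreover have "v = (\<chi> i. (\<lambda>i. v$i) i)" by simp
      ultimately show "v \<in> (\<lambda>f. \<chi> i. f i) ` (\<Pi>\<^sub>E i\<in>(UNIV::'n set). real ` {0..c})" by blast
    qed
    moreover have "finite (\<Pi>\<^sub>E i\<in>(UNIV::'n set). real ` {0..c})" by (intro finite_PiE) auto
    ultimately show ?thesis by (meson finite_imageI finite_subset)
  qed
  have ev1: "eventually (\<lambda>t. \<not> (\<exists>p\<in>P. t *\<^sub>R p \<le> v)) (at r)"
    if v: "\<not> (\<exists>p\<in>P. r *\<^sub>R p \<le> v)" for v
  proof -
    have "v /\<^sub>R r \<notin> Q"
    proof
      assume "v /\<^sub>R r \<in> Q"
      then obtain p where "p \<in> P" "p \<le> v /\<^sub>R r" by (auto simp: Q_def)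
      then have "p \<in> P" "r *\<^sub>R p \<le> v" using assms(2) by (auto simp: less_eq_vec_def field_simps)
      then show False using v by blast
    qed
    moreover have "((\<lambda>t. v /\<^sub>R t) \<longlongrightarrow> v /\<^sub>R r) (at r)"
      using assms(2) by (auto intro!: tendsto_intros)
    ultimately have e1: "eventually (\<lambda>t. v /\<^sub>R t \<in> - Q) (at r)"
      using closedQ by (intro topological_tendstoD) (auto simp: open_Compl)
    have "((\<lambda>t. t) \<longlongrightarrow> r) (at r)" by (rule tendsto_ident_at)
    then have e2: "eventually (\<lambda>t. t \<in> {0<..}) (at r)"
      using assms(2) by (intro topological_tendstoD) auto
    show ?thesis
      using e1 e2
    proof eventually_elim
      case (elim t)
      show ?case
      proof
        assume "\<exists>p\<in>P. t *\<^sub>R p \<le> v"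
        then obtain p where "p \<in> P" "t *\<^sub>R p \<le> v" by blast
        then have "p \<le> v /\<^sub>R t" using elim by (auto simp: less_eq_vec_def field_simps)
        then show False using elim \<open>p \<in> P\<close> by (auto simp: Q_def)
      qed
    qed
  qed
  have "eventually (\<lambda>t. \<forall>v\<in>F. \<not> (\<exists>p\<in>P. r *\<^sub>R p \<le> v) \<longrightarrow> \<not> (\<exists>p\<in>P. t *\<^sub>R p \<le> v)) (at r)"
    using finF ev1 by (intro eventually_ball_finite) (auto intro: eventually_mono)
  then obtain d where d: "d > 0"
    "\<And>t. t \<noteq> r \<Longrightarrow> dist t r < d \<Longrightarrow> \<forall>v\<in>F. \<not> (\<exists>p\<in>P. r *\<^sub>R p \<le> v) \<longrightarrow> \<not> (\<exists>p\<in>P. t *\<^sub>R p \<le> v)"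
    unfolding eventually_at by auto
  show ?thesis
  proof (intro exI[of _ "min d r"] conjI allI impI)
    show "min d r > 0" using d(1) assms(2) by simp
    show "min d r \<le> r" by simp
    fix \<epsilon> :: real assume e: "0 < \<epsilon> \<and> \<epsilon> < min d r"
    define t where "t = r - \<epsilon>"
    have t: "0 < t" "t \<le> r" "t \<noteq> r" "dist t r < d" using e by (auto simp: t_def dist_real_def)
    have key: "(\<exists>p\<in>P. t *\<^sub>R p \<le> expvec a) \<longleftrightarrow> (\<exists>p\<in>P. r *\<^sub>R p \<le> expvec a)" for a
    proof
      assume "\<exists>p\<in>P. r *\<^sub>R p \<le> expvec a"
      then obtain p where p: "p \<in> P" "r *\<^sub>R p \<le> expvec a" by blast
      have "t *\<^sub>R p \<le> r *\<^sub>R p" using Pnn p(1) t(2) by (auto simp: less_eq_vec_def intro!: mult_right_mono)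
      then show "\<exists>p\<in>P. t *\<^sub>R p \<le> expvec a" using p by (meson order_trans)
    next
      assume "\<exists>p\<in>P. t *\<^sub>R p \<le> expvec a"
      then obtain p where p: "p \<in> P" "t *\<^sub>R p \<le> expvec a" by blast
      define w where "w = (\<chi> i. min (expvec a $ i) (real c))"
      have wF: "w \<in> F" unfolding F_def w_def expvec_def
        by (auto simp: min_def image_iff) 
      have "t *\<^sub>R p \<le> w"
      proof -
        have "t * p$i \<le> real c" for i
        proof -
          have "t * p$i \<le> r * p$i" using Pnn p(1) t(2) by (auto intro!: mult_right_mono)
          also have "\<dots> \<le> r * K" using K p(1) assms(2) by (auto intro!: mult_left_mono)
          also have "\<dots> \<le> real c" unfolding c_def by linarith
          finally show ?thesis .
        qed
        then show ?thesis using p(2) by (auto simp: w_def less_eq_vec_def)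
      qed
      then have "\<exists>p\<in>P. t *\<^sub>R p \<le> w" using p(1) by blast
      then obtain p' where p': "p' \<in> P" "r *\<^sub>R p' \<le> w" using d(2)[OF t(3) t(4)] wF by blast
      have "w \<le> expvec a" by (auto simp: w_def less_eq_vec_def)
      then show "\<exists>p\<in>P. r *\<^sub>R p \<le> expvec a" using p' by (meson order_trans)
    qed
    have "{monom a | a. expvec a \<in> (\<lambda>v. t *\<^sub>R v) ` NP I} = {monom a | a. expvec a \<in> (\<lambda>v. r *\<^sub>R v) ` NP I}"
      using key scal[OF t(1)] scal[OF assms(2)] by simp
    then show "real_power I (r - \<epsilon>) = real_power I r" unfolding real_power_def t_def[symmetric] by (rule arg_cong)
  qed
qed

end
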